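(* The continuum $|\mathbb G|$ is hereditarily unicoherent, i.e. the intersection of any two subcontinua of $|\mathbb G|$ is connected.
   Context: A graph is a pair $A=(V(A),E(A))$ with $E(A)\subseteq V(A)^2$ reflexive and symmetric; a topological graph additionally has $V$ compact, second countable, zero-dimensional and $E$ closed. Epimorphisms are (continuous) edge-preserving maps surjective on vertices and edges. A vertex set $S$ is disconnected if it splits into two nonempty closed subsets with no edges between them; otherwise connected; components are maximal connected subsets. An epimorphism $f\colon A\to B$ is confluent if for every connected $Q\subseteq V(B)$ each component $C$ of $f^{-1}(Q)$ has $f(C)=Q$. $\mathbb G$ is the projective Fraïssé limit of the class of finite connected graphs with confluent epimorphisms: the unique topological graph such that (1) every finite connected graph is a confluent epimorphic image of $\mathbb G$; (2) for finite connected $A,B$ and confluent epimorphisms $f\colon\mathbb G\to A$, $g\colon B\to A$ there is a confluent epimorphism $h\colon\mathbb G\to B$ with $f=g\circ h$; (3) for each $\varepsilon>0$ some confluent epimorphism from $\mathbb G$ onto a finite connected graph has all point-preimages of diameter $<\varepsilon$. The edge relation of $\mathbb G$ is an equivalence relation and $|\mathbb G|=V(\mathbb G)/E(\mathbb G)$ is its topological realization. *)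

theory Defs
  imports "HOL-Analysis.Analysis"
begin

text \<open>A graph is given by a topology X (vertex set = topspace X) and an edge
relation E. Finite graphs carry the discrete topology.\<close>

definition graph_rel :: "'a set \<Rightarrow> ('a \<times> 'a) set \<Rightarrow> bool" where
  "graph_rel V E \<longleftrightarrow> E \<subseteq> V \<times> V \<and> (\<forall>v\<in>V. (v, v) \<in> E) \<and> (\<forall>u v. (u, v) \<in> E \<longrightarrow> (v, u) \<in> E)"

definition topological_graph :: "'a topology \<Rightarrow> ('a \<times> 'a) set \<Rightarrow> bool" where
  "topological_graph X E \<longleftrightarrow>
     graph_rel (topspace X) E \<and> compact_space X \<and> second_countable X \<and> X dim_le 0 \<and>
     closedin (prod_topology X X) E"

definition gdisconnected :: "'a topology \<Rightarrow> ('a \<times> 'a) set \<Rightarrow> 'a set \<Rightarrow> bool" where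
  "gdisconnected X E S \<longleftrightarrow>
     (\<exists>P Q. P \<noteq> {} \<and> Q \<noteq> {} \<and> P \<union> Q = S \<and> P \<inter> Q = {} \<and>
        closedin (subtopology X S) P \<and> closedin (subtopology X S) Q \<and>
        (\<forall>p\<in>P. \<forall>q\<in>Q. (p, q) \<notin> E))"

definition gconnected :: "'a topology \<Rightarrow> ('a \<times> 'a) set \<Rightarrow> 'a set \<Rightarrow> bool" where
  "gconnected X E S \<longleftrightarrow> S \<subseteq> topspace X \<and> \<not> gdisconnected X E S"

definition gcomponent :: "'a topology \<Rightarrow> ('a \<times> 'a) set \<Rightarrow> 'a set \<Rightarrow> 'a set \<Rightarrow> bool" where
  "gcomponent X E S C \<longleftrightarrow>
     C \<noteq> {} \<and> C \<subseteq> S \<and> gconnected X E C \<and>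
     (\<forall>D. C \<subseteq> D \<and> D \<subseteq> S \<and> gconnected X E D \<longrightarrow> D = C)"

definition epimorphism ::
  "'a topology \<Rightarrow> ('a \<times> 'a) set \<Rightarrow> 'b topology \<Rightarrow> ('b \<times> 'b) set \<Rightarrow> ('a \<Rightarrow> 'b) \<Rightarrow> bool" where
  "epimorphism X E Y F f \<longleftrightarrow>
     continuous_map X Y f \<and> f ` topspace X = topspace Y \<and>
     (\<lambda>(a, b). (f a, f b)) ` E = F"

definition confluent ::
  "'a topology \<Rightarrow> ('a \<times> 'a) set \<Rightarrow> 'b topology \<Rightarrow> ('b \<times> 'b) set \<Rightarrow> ('a \<Rightarrow> 'b) \<Rightarrow> bool" where
  "confluent X E Y F f \<longleftrightarrow>
     epimorphism X E Y F f \<and>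
     (\<forall>Q C. Q \<subseteq> topspace Y \<and> gconnected Y F Q \<and>
            gcomponent X E {x \<in> topspace X. f x \<in> Q} C \<longrightarrow> f ` C = Q)"

text \<open>Finite connected graphs, represented (up to isomorphism) with vertices in nat
and the discrete topology.\<close>
definition finite_connected_graph :: "nat set \<Rightarrow> (nat \<times> nat) set \<Rightarrow> bool" where
  "finite_connected_graph V E \<longleftrightarrow>
     finite V \<and> V \<noteq> {} \<and> graph_rel V E \<and> gconnected (discrete_topology V) E V"

text \<open>The defining properties (1)-(3) of the projective Fraisse limit G, for a
topological graph whose vertex set V lies in a metric space (giving the diameter).\<close>
definition is_Fraisse_limit_G :: "('a::metric_space) set \<Rightarrow> ('a \<times> 'a) set \<Rightarrow> bool" where
  "is_Fraisse_limit_G V E \<longleftrightarrow>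
     topological_graph (top_of_set V) E \<and>
     (\<forall>A EA. finite_connected_graph A EA \<longrightarrow>
        (\<exists>f. confluent (top_of_set V) E (discrete_topology A) EA f)) \<and>
     (\<forall>A EA B EB f g. finite_connected_graph A EA \<and> finite_connected_graph B EB \<and>
        confluent (top_of_set V) E (discrete_topology A) EA f \<and>
        confluent (discrete_topology B) EB (discrete_topology A) EA g \<longrightarrow>
        (\<exists>h. confluent (top_of_set V) E (discrete_topology B) EB h \<and>
             (\<forall>x\<in>V. f x = g (h x)))) \<and>
     (\<forall>\<epsilon>>0. \<exists>A EA f. finite_connected_graph A EA \<and>
        confluent (top_of_set V) E (discrete_topology A) EA f \<and>
        (\<forall>a\<in>A. diameter {x \<in> V. f x = a} < \<epsilon>))"

definition subcontinuum :: "'a topology \<Rightarrow> 'a set \<Rightarrow> bool" where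
  "subcontinuum Y K \<longleftrightarrow> K \<subseteq> topspace Y \<and> K \<noteq> {} \<and> compactin Y K \<and> connectedin Y K"

definition hereditarily_unicoherent :: "'a topology \<Rightarrow> bool" where
  "hereditarily_unicoherent Y \<longleftrightarrow>
     (\<forall>K L. subcontinuum Y K \<and> subcontinuum Y L \<longrightarrow> connectedin Y (K \<inter> L))"

end

theory Submission
  imports Defs
begin


lemma gconn_disc:
  assumes "gconnected (discrete_topology U) F S" "P \<subseteq> S"
    "\<forall>p\<in>P. \<forall>q\<in>S. (p,q)\<in>F \<longrightarrow> q\<in>P"
  shows "P = {} \<or> P = S"
proof (rule ccontr)
  assume c: "\<not> (P = {} \<or> P = S)"
  have SU: "S \<subseteq> U" using assms(1) by (simp add: gconnected_def)
  have "gdisconnected (discrete_topology U) F S"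
    unfolding gdisconnected_def
    apply (rule exI[of _ P], rule exI[of _ "S - P"])
    using c assms(2,3) SU by (auto simp: subtopology_discrete_topology closedin_discrete_topology)
  then show False using assms(1) by (simp add: gconnected_def)
qed

lemma gconn_disc_intro:
  assumes "S \<subseteq> U"
    "\<And>P. P \<subseteq> S \<Longrightarrow> P \<noteq> {} \<Longrightarrow> (\<forall>p\<in>P. \<forall>q\<in>S. (p,q)\<in>F \<longrightarrow> q\<in>P) \<Longrightarrow> P = S"
  shows "gconnected (discrete_topology U) F S"
  unfolding gconnected_def gdisconnected_def
proof (intro conjI notI)
  show "S \<subseteq> topspace (discrete_topology U)" using assms(1) by simp
next
  assume "\<exists>P Q. P \<noteq> {} \<and> Q \<noteq> {} \<and> P \<union> Q = S \<and> P \<inter> Q = {} \<and>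
        closedin (subtopology (discrete_topology U) S) P \<and> closedin (subtopology (discrete_topology U) S) Q \<and>
        (\<forall>p\<in>P. \<forall>q\<in>Q. (p, q) \<notin> F)"
  then obtain P Q where h: "P \<noteq> {}" "Q \<noteq> {}" "P \<union> Q = S" "P \<inter> Q = {}"
     "\<forall>p\<in>P. \<forall>q\<in>Q. (p, q) \<notin> F" by blast
  have "\<forall>p\<in>P. \<forall>q\<in>S. (p,q)\<in>F \<longrightarrow> q\<in>P" using h by blast
  then have "P = S" using assms(2)[of P] h by blast
  then show False using h by blast
qed

definition cov_V :: "nat set \<Rightarrow> nat set" where
  "cov_V A = {n. n div 2 \<in> A}"

definition cov_E :: "(nat \<times> nat) set \<Rightarrow> (nat \<Rightarrow> nat \<Rightarrow> bool) \<Rightarrow> (nat \<times> nat) set" where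
  "cov_E EA \<sigma> = {(m,n). (m div 2, n div 2) \<in> EA \<and> (m mod 2 = n mod 2 \<longleftrightarrow> \<not> \<sigma> (m div 2) (n div 2))}"

definition cvlift :: "(nat \<Rightarrow> nat \<Rightarrow> bool) \<Rightarrow> nat \<Rightarrow> nat \<Rightarrow> nat" where
  "cvlift \<sigma> c s = 2 * s + (if ((c mod 2 = 1) \<noteq> (\<sigma> (c div 2) s)) then 1 else 0)"

lemma cvlift_div[simp]: "cvlift \<sigma> c s div 2 = s" by (simp add: cvlift_def)

lemma cvlift_edge: "(c div 2, s) \<in> EA \<Longrightarrow> (c, cvlift \<sigma> c s) \<in> cov_E EA \<sigma>"
  unfolding cov_E_def cvlift_def by auto

lemma cov_graph:
  assumes "graph_rel A EA" "\<And>a b. \<sigma> a b = \<sigma> b a" "\<And>a. \<not> \<sigma> a a"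
  shows "graph_rel (cov_V A) (cov_E EA \<sigma>)"
  unfolding graph_rel_def
proof (intro conjI ballI allI impI)
  have sub: "EA \<subseteq> A \<times> A" and refl: "\<forall>v\<in>A. (v,v) \<in> EA" and sym: "\<forall>u v. (u,v) \<in> EA \<longrightarrow> (v,u) \<in> EA"
    using assms(1) unfolding graph_rel_def by blast+
  show "cov_E EA \<sigma> \<subseteq> cov_V A \<times> cov_V A"
  proof
    fix e assume "e \<in> cov_E EA \<sigma>"
    then obtain m n where e: "e = (m,n)" "(m div 2, n div 2) \<in> EA" unfolding cov_E_def by blast
    then show "e \<in> cov_V A \<times> cov_V A" using sub unfolding cov_V_def by blast
  qed
  fix v assume "v \<in> cov_V A"
  then have "(v div 2, v div 2) \<in> EA" using refl unfolding cov_V_def by blast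
  then show "(v, v) \<in> cov_E EA \<sigma>" using assms(3) unfolding cov_E_def by blast
next
  have sym: "\<forall>u v. (u,v) \<in> EA \<longrightarrow> (v,u) \<in> EA"
    using assms(1) unfolding graph_rel_def by blast
  fix u v assume "(u, v) \<in> cov_E EA \<sigma>"
  then show "(v, u) \<in> cov_E EA \<sigma>" using sym assms(2) unfolding cov_E_def by auto
qed

lemma cov_finite: "finite A \<Longrightarrow> finite (cov_V A)"
proof -
  assume "finite A"
  have "cov_V A \<subseteq> (\<lambda>(a,i). 2*a+i) ` (A \<times> {0,1})"
  proof
    fix n assume "n \<in> cov_V A"
    then have "n div 2 \<in> A" by (simp add: cov_V_def)
    moreover have "n mod 2 \<in> {0,1}" by (simp; presburger)
    ultimately have "(n div 2, n mod 2) \<in> A \<times> {0,1}" by blast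
    moreover have "n = (\<lambda>(a,i). 2*a+i) (n div 2, n mod 2)" by simp
    ultimately show "n \<in> (\<lambda>(a,i). 2*a+i) ` (A \<times> {0,1})" by (metis (no_types) image_eqI)
  qed
  moreover have "finite (A \<times> {0::nat,1})" using \<open>finite A\<close> by simp
  ultimately show ?thesis by (meson finite_imageI finite_subset)
qed

lemma cov_confluent:
  assumes "finite_connected_graph A EA" "\<And>a b. \<sigma> a b = \<sigma> b a" "\<And>a. \<not> \<sigma> a a"
  shows "confluent (discrete_topology (cov_V A)) (cov_E EA \<sigma>) (discrete_topology A) EA (\<lambda>n. n div 2)"
proof -
  have gA: "graph_rel A EA" using assms(1) by (simp add: finite_connected_graph_def)
  have gB: "graph_rel (cov_V A) (cov_E EA \<sigma>)" using cov_graph[OF gA assms(2,3)] .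
  have epi: "epimorphism (discrete_topology (cov_V A)) (cov_E EA \<sigma>) (discrete_topology A) EA (\<lambda>n. n div 2)"
    unfolding epimorphism_def
  proof (intro conjI)
    show "continuous_map (discrete_topology (cov_V A)) (discrete_topology A) (\<lambda>n. n div 2)"
      by (auto simp: continuous_map_from_discrete_topology cov_V_def)
    show "(\<lambda>n. n div 2) ` topspace (discrete_topology (cov_V A)) = topspace (discrete_topology A)"
    proof (auto simp: cov_V_def)
      fix a assume "a \<in> A" then show "a \<in> (\<lambda>n. n div 2) ` {n. n div 2 \<in> A}"
        by (intro image_eqI[of _ _ "2*a"]) auto
    qed
    show "(\<lambda>(a, b). (a div 2, b div 2)) ` cov_E EA \<sigma> = EA"
    proof
      show "(\<lambda>(a, b). (a div 2, b div 2)) ` cov_E EA \<sigma> \<subseteq> EA" by (auto simp: cov_E_def)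
      show "EA \<subseteq> (\<lambda>(a, b). (a div 2, b div 2)) ` cov_E EA \<sigma>"
      proof
        fix e assume e: "e \<in> EA"
        obtain a b where ab: "e = (a,b)" by (cases e)
        have "(2*a, cvlift \<sigma> (2*a) b) \<in> cov_E EA \<sigma>" using e ab by (intro cvlift_edge) auto
        then show "e \<in> (\<lambda>(a, b). (a div 2, b div 2)) ` cov_E EA \<sigma>"
          using ab by (intro image_eqI[of _ _ "(2*a, cvlift \<sigma> (2*a) b)"]) auto
      qed
    qed
  qed
  show ?thesis unfolding confluent_def
  proof (intro conjI epi allI impI)
    fix Q C
    assume h: "Q \<subseteq> topspace (discrete_topology A) \<and> gconnected (discrete_topology A) EA Q \<and>
        gcomponent (discrete_topology (cov_V A)) (cov_E EA \<sigma>)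
         {x \<in> topspace (discrete_topology (cov_V A)). x div 2 \<in> Q} C"
    let ?S = "{x \<in> cov_V A. x div 2 \<in> Q}"
    have QA: "Q \<subseteq> A" and Qc: "gconnected (discrete_topology A) EA Q" using h by auto
    have Cne: "C \<noteq> {}" and CS: "C \<subseteq> ?S" and Cc: "gconnected (discrete_topology (cov_V A)) (cov_E EA \<sigma>) C"
      and Cmax: "\<And>D. C \<subseteq> D \<Longrightarrow> D \<subseteq> ?S \<Longrightarrow> gconnected (discrete_topology (cov_V A)) (cov_E EA \<sigma>) D \<Longrightarrow> D = C"
      using h unfolding gcomponent_def by auto
    let ?R = "(\<lambda>n. n div 2) ` C"
    have RQ: "?R \<subseteq> Q" using CS by auto
    have closed: "\<forall>p\<in>?R. \<forall>s\<in>Q. (p,s)\<in>EA \<longrightarrow> s\<in>?R"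
    proof (intro ballI impI)
      fix p s assume p: "p \<in> ?R" and s: "s \<in> Q" and e: "(p,s) \<in> EA"
      then obtain c where c: "c \<in> C" "p = c div 2" by auto
      let ?s' = "cvlift \<sigma> c s"
      have ce: "(c, ?s') \<in> cov_E EA \<sigma>" using e c by (intro cvlift_edge) auto
      have s'S: "?s' \<in> ?S" using s QA by (auto simp: cov_V_def)
      have conn: "gconnected (discrete_topology (cov_V A)) (cov_E EA \<sigma>) (insert ?s' C)"
      proof (rule gconn_disc_intro)
        show "insert ?s' C \<subseteq> cov_V A" using s'S CS by auto
        fix P assume P: "P \<subseteq> insert ?s' C" "P \<noteq> {}" "\<forall>p\<in>P. \<forall>q\<in>insert ?s' C. (p, q) \<in> cov_E EA \<sigma> \<longrightarrow> q \<in> P"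
        have PC: "P \<inter> C = {} \<or> P \<inter> C = C"
          using gconn_disc[OF Cc, of "P \<inter> C"] P(3) by blast
        show "P = insert ?s' C"
        proof (cases "P \<inter> C = C")
          case True
          then have "?s' \<in> P" using P(3) c(1) ce by blast
          then show ?thesis using True P(1) by blast
        next
          case False
          then have "P \<inter> C = {}" using PC by blast
          then have "P = {?s'}" using P(1,2) by blast
          moreover have "(?s', c) \<in> cov_E EA \<sigma>" using gB ce unfolding graph_rel_def by blast
          ultimately have "c \<in> P" using P(3) c(1) by blast
          then show ?thesis using \<open>P \<inter> C = {}\<close> c(1) by blast
        qed
      qed
      have "insert ?s' C = C" using Cmax[OF _ _ conn] s'S CS by blast
      then have "?s' \<in> C" by blast
      then show "s \<in> ?R" by (metis image_eqI cvlift_div)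
    qed
    have "?R = {} \<or> ?R = Q" using gconn_disc[OF Qc RQ closed] .
    then show "(\<lambda>n. n div 2) ` C = Q" using Cne by blast
  qed
qed

lemma cov_connected:
  assumes "finite_connected_graph A EA" "\<And>a b. \<sigma> a b = \<sigma> b a" "\<And>a. \<not> \<sigma> a a"
    and unbal: "\<And>\<psi>. (\<forall>a b. (a,b) \<in> EA \<longrightarrow> (\<psi> b \<longleftrightarrow> (\<psi> a \<noteq> \<sigma> a b))) \<Longrightarrow> False"
  shows "finite_connected_graph (cov_V A) (cov_E EA \<sigma>)"
proof -
  have gA: "graph_rel A EA" and fA: "finite A" and neA: "A \<noteq> {}"
    and cA: "gconnected (discrete_topology A) EA A"
    using assms(1) by (auto simp: finite_connected_graph_def)
  have gB: "graph_rel (cov_V A) (cov_E EA \<sigma>)" using cov_graph[OF gA assms(2,3)] .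
  have symB: "\<And>x y. (x,y) \<in> cov_E EA \<sigma> \<Longrightarrow> (y,x) \<in> cov_E EA \<sigma>" using gB unfolding graph_rel_def by blast
  have EAsub: "\<And>a b. (a,b) \<in> EA \<Longrightarrow> a \<in> A \<and> b \<in> A" using gA unfolding graph_rel_def by blast
  have conn: "gconnected (discrete_topology (cov_V A)) (cov_E EA \<sigma>) (cov_V A)"
  proof (rule gconn_disc_intro)
    show "cov_V A \<subseteq> cov_V A" by simp
    fix P assume P: "P \<subseteq> cov_V A" "P \<noteq> {}" "\<forall>p\<in>P. \<forall>q\<in>cov_V A. (p, q) \<in> cov_E EA \<sigma> \<longrightarrow> q \<in> P"
    have P2: "\<forall>p\<in>cov_V A - P. \<forall>q\<in>cov_V A. (p, q) \<in> cov_E EA \<sigma> \<longrightarrow> q \<in> cov_V A - P"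
      using P(3) symB by blast
    have liftV: "\<And>c s. s \<in> A \<Longrightarrow> cvlift \<sigma> c s \<in> cov_V A" by (auto simp: cov_V_def)
    have lift_other: "\<And>c s. (c div 2, s) \<in> EA \<Longrightarrow> c \<in> cov_V A \<Longrightarrow> c \<in> P \<Longrightarrow> cvlift \<sigma> c s \<in> P"
      using P(3) cvlift_edge liftV EAsub by blast
    have lift_otherQ: "\<And>c s. (c div 2, s) \<in> EA \<Longrightarrow> c \<in> cov_V A \<Longrightarrow> c \<notin> P \<Longrightarrow> cvlift \<sigma> c s \<notin> P"
      using P2 cvlift_edge liftV EAsub by blast
    have c01: "\<And>a b. cvlift \<sigma> (2*a) b \<noteq> cvlift \<sigma> (2*a+1) b \<and> {cvlift \<sigma> (2*a) b, cvlift \<sigma> (2*a+1) b} = {2*b, 2*b+1}"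
      by (cases "\<sigma> a b") (simp_all add: cvlift_def insert_commute)
    define D where "D = {a \<in> A. 2*a \<in> P \<and> 2*a+1 \<in> P}"
    define D' where "D' = {a \<in> A. 2*a \<notin> P \<and> 2*a+1 \<notin> P}"
    have vA: "\<And>a. a \<in> A \<Longrightarrow> 2*a \<in> cov_V A \<and> 2*a+1 \<in> cov_V A" by (auto simp: cov_V_def)
    have "\<forall>p\<in>D. \<forall>q\<in>A. (p,q)\<in>EA \<longrightarrow> q\<in>D"
    proof (intro ballI impI)
      fix p q assume "p \<in> D" "q \<in> A" "(p,q) \<in> EA"
      then have "cvlift \<sigma> (2*p) q \<in> P" "cvlift \<sigma> (2*p+1) q \<in> P"
        using lift_other vA unfolding D_def by auto
      then have "{cvlift \<sigma> (2*p) q, cvlift \<sigma> (2*p+1) q} \<subseteq> P" by simp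
      moreover have eq: "{cvlift \<sigma> (2*p) q, cvlift \<sigma> (2*p+1) q} = {2*q, 2*q+1}" using c01 by blast
      ultimately have "{2*q, 2*q+1} \<subseteq> P" by (simp only:)
      then show "q \<in> D" using \<open>q \<in> A\<close> unfolding D_def by simp
    qed
    moreover have "D \<subseteq> A" unfolding D_def by blast
    ultimately have D: "D = {} \<or> D = A" using gconn_disc[OF cA, of D] by blast
    have "\<forall>p\<in>D'. \<forall>q\<in>A. (p,q)\<in>EA \<longrightarrow> q\<in>D'"
    proof (intro ballI impI)
      fix p q assume "p \<in> D'" "q \<in> A" "(p,q) \<in> EA"
      then have "cvlift \<sigma> (2*p) q \<notin> P" "cvlift \<sigma> (2*p+1) q \<notin> P"
        using lift_otherQ vA unfolding D'_def by auto
      then have "{cvlift \<sigma> (2*p) q, cvlift \<sigma> (2*p+1) q} \<inter> P = {}" by simp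
      moreover have eq: "{cvlift \<sigma> (2*p) q, cvlift \<sigma> (2*p+1) q} = {2*q, 2*q+1}" using c01 by blast
      ultimately have "{2*q, 2*q+1} \<inter> P = {}" by (simp only:)
      then show "q \<in> D'" using \<open>q \<in> A\<close> unfolding D'_def by simp
    qed
    moreover have "D' \<subseteq> A" unfolding D'_def by blast
    ultimately have D': "D' = {} \<or> D' = A" using gconn_disc[OF cA, of D'] by blast
    show "P = cov_V A"
    proof (cases "D = A")
      case True
      show ?thesis
      proof
        show "cov_V A \<subseteq> P"
        proof
          fix n assume "n \<in> cov_V A"
          then have "n div 2 \<in> D" using True by (simp add: cov_V_def)
          then have "{2*(n div 2), 2*(n div 2) + 1} \<subseteq> P" unfolding D_def by simp
          moreover have "n \<in> {2*(n div 2), 2*(n div 2) + 1}" by (simp; presburger)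
          ultimately show "n \<in> P" by (rule subsetD)
        qed
      qed (use P in auto)
    next
      case False
      then have D0: "D = {}" using D by blast
      have D'0: "D' = {}"
      proof (rule ccontr)
        assume "D' \<noteq> {}"
        then have "D' = A" using D' by blast
        obtain n where n: "n \<in> P" using P(2) by blast
        then have "n div 2 \<in> D'" using \<open>D' = A\<close> P(1) by (auto simp: cov_V_def)
        then have "{2*(n div 2), 2*(n div 2) + 1} \<inter> P = {}" unfolding D'_def by simp
        moreover have "n \<in> {2*(n div 2), 2*(n div 2) + 1}" by (simp; presburger)
        ultimately show False using n by blast
      qed
      define \<psi> where "\<psi> a = (2*a \<in> P)" for a
      have one: "\<And>a. a \<in> A \<Longrightarrow> (2*a+1 \<in> P) = (\<not> \<psi> a)"
        using D0 D'0 unfolding D_def D'_def \<psi>_def by blast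
      have "\<forall>a b. (a,b) \<in> EA \<longrightarrow> (\<psi> b \<longleftrightarrow> (\<psi> a \<noteq> \<sigma> a b))"
      proof (intro allI impI)
        fix a b assume e: "(a,b) \<in> EA"
        then have ab: "a \<in> A" "b \<in> A" using EAsub by auto
        have "(2*a \<in> P) = (cvlift \<sigma> (2*a) b \<in> P)"
          using lift_other[of "2*a" b] lift_otherQ[of "2*a" b] e vA ab by auto
        moreover have "cvlift \<sigma> (2*a) b = (if \<sigma> a b then 2*b+1 else 2*b)" by (simp add: cvlift_def)
        ultimately have "\<psi> a = (if \<sigma> a b then 2*b+1 \<in> P else 2*b \<in> P)" unfolding \<psi>_def by simp
        then show "\<psi> b \<longleftrightarrow> (\<psi> a \<noteq> \<sigma> a b)"
          using one[OF ab(2)] unfolding \<psi>_def by (cases "\<sigma> a b") simp_all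
      qed
      then show ?thesis using unbal by blast
    qed
  qed
  obtain a where "a \<in> A" using neA by blast
  then have "2*a \<in> cov_V A" by (simp add: cov_V_def)
  then show ?thesis unfolding finite_connected_graph_def
    using cov_finite[OF fA] gB conn by blast
qed



lemma closedin_disc_pre:
  assumes "continuous_map X (discrete_topology U) h"
  shows "closedin X {x \<in> topspace X. R (h x)}"
proof -
  have "{x \<in> topspace X. R (h x)} = {x \<in> topspace X. h x \<in> {u \<in> U. R u}}"
    using continuous_map_image_subset_topspace[OF assms] by auto
  also have "closedin X \<dots>"
    by (rule closedin_continuous_map_preimage[OF assms]) (auto simp: closedin_discrete_topology)
  finally show ?thesis .
qed

lemma gconn_eq:
  assumes "gconnected X F S" "continuous_map X (discrete_topology U) h"
    "\<And>x y. x \<in> S \<Longrightarrow> y \<in> S \<Longrightarrow> (x,y) \<in> F \<Longrightarrow> R (h x) = R (h y)"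
    "x \<in> S" "y \<in> S"
  shows "R (h x) = R (h y)"
proof (rule ccontr)
  assume ne: "R (h x) \<noteq> R (h y)"
  have ST: "S \<subseteq> topspace X" using assms(1) by (simp add: gconnected_def)
  define P where "P = {z \<in> S. R (h z) = R (h x)}"
  define Q where "Q = {z \<in> S. R (h z) \<noteq> R (h x)}"
  have "P = S \<inter> {z \<in> topspace X. (\<lambda>n. R n = R (h x)) (h z)}" using ST unfolding P_def by blast
  note eqP = this
  have cP: "closedin (subtopology X S) P"
    unfolding eqP by (rule closedin_subtopology_Int_closed[OF closedin_disc_pre[OF assms(2)]])
  have "Q = S \<inter> {z \<in> topspace X. (\<lambda>n. R n \<noteq> R (h x)) (h z)}" using ST unfolding Q_def by blast
  note eqQ = this
  have cQ: "closedin (subtopology X S) Q"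
    unfolding eqQ by (rule closedin_subtopology_Int_closed[OF closedin_disc_pre[OF assms(2)]])
  have "gdisconnected X F S"
    unfolding gdisconnected_def
  proof (rule exI[of _ P], rule exI[of _ Q], intro conjI ballI cP cQ)
    show "P \<noteq> {}" using assms(4) unfolding P_def by (metis (mono_tags, lifting) empty_iff mem_Collect_eq)
    show "Q \<noteq> {}" using assms(5) ne unfolding Q_def by (metis (mono_tags, lifting) empty_iff mem_Collect_eq)
    show "P \<union> Q = S" unfolding P_def Q_def by (rule set_eqI) (simp only: Un_iff mem_Collect_eq, argo)
    show "P \<inter> Q = {}" unfolding P_def Q_def by (rule set_eqI) (simp only: Int_iff mem_Collect_eq empty_iff, argo)
    fix p q assume pq: "p \<in> P" "q \<in> Q"
    show "(p, q) \<notin> F"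
    proof
      assume e: "(p, q) \<in> F"
      have "p \<in> S \<and> R (h p) = R (h x)" using pq(1) unfolding P_def by (rule CollectD)
      moreover have "q \<in> S \<and> R (h q) \<noteq> R (h x)" using pq(2) unfolding Q_def by (rule CollectD)
      ultimately show False using assms(3)[of p q] e by argo
    qed
  qed
  then show False using assms(1) by (simp add: gconnected_def)
qed



theorem mainTheorem15:
  fixes V :: "'a::metric_space set" and E :: "('a \<times> 'a) set"
    and Y :: "'b topology" and q :: "'a \<Rightarrow> 'b"
  assumes "is_Fraisse_limit_G V E"
    and "quotient_map (top_of_set V) Y q"
    and "\<And>x y. x \<in> V \<Longrightarrow> y \<in> V \<Longrightarrow> (q x = q y \<longleftrightarrow> (x, y) \<in> E)"
  shows "hereditarily_unicoherent Y"
proof -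
  have tg: "topological_graph (top_of_set V) E"
    and amalg: "\<And>A EA B EB f g. finite_connected_graph A EA \<Longrightarrow> finite_connected_graph B EB \<Longrightarrow>
        confluent (top_of_set V) E (discrete_topology A) EA f \<Longrightarrow>
        confluent (discrete_topology B) EB (discrete_topology A) EA g \<Longrightarrow>
        (\<exists>h. confluent (top_of_set V) E (discrete_topology B) EB h \<and> (\<forall>x\<in>V. f x = g (h x)))"
    and small: "\<And>\<epsilon>. \<epsilon> > 0 \<Longrightarrow> \<exists>A EA f. finite_connected_graph A EA \<and>
        confluent (top_of_set V) E (discrete_topology A) EA f \<and>
        (\<forall>a\<in>A. diameter {x \<in> V. f x = a} < \<epsilon>)"
    using assms(1) unfolding is_Fraisse_limit_G_def by blast+
  have gV: "graph_rel V E" and cV: "compact V" and cE0: "closedin (prod_topology (top_of_set V) (top_of_set V)) E"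
    using tg unfolding topological_graph_def compact_space_def
    by (auto simp: compactin_subtopology compactin_euclidean_iff)
  have Esub: "\<And>x y. (x,y) \<in> E \<Longrightarrow> x \<in> V \<and> y \<in> V" using gV unfolding graph_rel_def by blast
  have Erefl: "\<And>x. x \<in> V \<Longrightarrow> (x,x) \<in> E" using gV unfolding graph_rel_def by blast
  have Esym: "\<And>x y. (x,y) \<in> E \<Longrightarrow> (y,x) \<in> E" using gV unfolding graph_rel_def by blast
  have clV: "closed V" using cV by (rule compact_imp_closed)
  have cE: "compact E"
  proof -
    have "closedin (top_of_set (V \<times> V)) E" using cE0 by (simp add: prod_topology_subtopology_eu)
    then have "closed E" using closedin_closed_trans compact_imp_closed compact_Times cV by blast
    moreover have "E = E \<inter> (V \<times> V)" using Esub by auto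
    ultimately show ?thesis using closed_Int_compact compact_Times cV by metis
  qed
  have qc: "continuous_map (top_of_set V) Y q" using assms(2) by (rule quotient_imp_continuous_map)
  have tY: "topspace Y = q ` V" using assms(2) unfolding quotient_map_def by simp
  have sat: "\<And>F. F \<subseteq> V \<Longrightarrow> {x \<in> V. q x \<in> q ` F} = snd ` (E \<inter> (F \<times> V))"
  proof -
    fix F assume FV: "F \<subseteq> V"
    show "{x \<in> V. q x \<in> q ` F} = snd ` (E \<inter> (F \<times> V))"
    proof
      show "{x \<in> V. q x \<in> q ` F} \<subseteq> snd ` (E \<inter> (F \<times> V))"
      proof
        fix x assume "x \<in> {x \<in> V. q x \<in> q ` F}"
        then obtain y where y: "x \<in> V" "y \<in> F" "q x = q y" by auto
        then have "(y,x) \<in> E" using assms(3)[of y x] FV by auto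
        then show "x \<in> snd ` (E \<inter> (F \<times> V))" using y by (intro image_eqI[of _ _ "(y,x)"]) auto
      qed
      show "snd ` (E \<inter> (F \<times> V)) \<subseteq> {x \<in> V. q x \<in> q ` F}"
      proof
        fix x assume "x \<in> snd ` (E \<inter> (F \<times> V))"
        then obtain y where y: "(y,x) \<in> E" "y \<in> F" by auto
        then have "x \<in> V" "q y = q x" using assms(3)[of y x] Esub by auto
        then show "x \<in> {x \<in> V. q x \<in> q ` F}" using y by (metis (mono_tags, lifting) image_eqI mem_Collect_eq)
      qed
    qed
  qed
  have snd_compact: "\<And>S. compact S \<Longrightarrow> compact (snd ` S)"
    by (intro compact_continuous_image continuous_on_snd continuous_on_id)
  have qclosed: "\<And>F. closedin (top_of_set V) F \<Longrightarrow> closedin Y (q ` F)"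
  proof -
    fix F assume F: "closedin (top_of_set V) F"
    then have FV: "F \<subseteq> V" using closedin_imp_subset[OF F] by simp
    have "closed F" using F clV closedin_closed_trans by blast
    then have "compact (F \<times> V)" using cV compact_Times closed_Int_compact FV
      by (metis Int_absorb1 Int_commute)
    then have "compact (E \<inter> (F \<times> V))" using cE compact_Int_closed compact_imp_closed by metis
    then have "compact {x \<in> V. q x \<in> q ` F}" using sat[OF FV] snd_compact by metis
    then have "closedin (top_of_set V) {x \<in> V. q x \<in> q ` F}"
      by (intro closed_subset compact_imp_closed) auto
    moreover have "q ` F \<subseteq> topspace Y" using FV tY by auto
    ultimately show "closedin Y (q ` F)" using assms(2) unfolding quotient_map_closedin by auto
  qed
  have proper: "proper_map (top_of_set V) Y q"
    unfolding proper_map_def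
  proof (intro conjI ballI)
    show "closed_map (top_of_set V) Y q" unfolding closed_map_def using qclosed by blast
    fix y assume "y \<in> topspace Y"
    then obtain x0 where x0: "x0 \<in> V" "y = q x0" using tY by auto
    have "{x \<in> V. q x = y} = {x \<in> V. q x \<in> q ` {x0}}" using x0 by auto
    also have "\<dots> = snd ` (E \<inter> ({x0} \<times> V))" using sat[of "{x0}"] x0 by auto
    finally have eq: "{x \<in> V. q x = y} = snd ` (E \<inter> ({x0} \<times> V))" .
    have "compact (E \<inter> ({x0} \<times> V))" using cE compact_Int_closed compact_imp_closed compact_Times cV compact_sing by metis
    then have "compact {x \<in> V. q x = y}" unfolding eq using snd_compact by blast
    then show "compactin (top_of_set V) {x \<in> topspace (top_of_set V). q x = y}"
      by (auto simp: compactin_subtopology compactin_euclidean_iff)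
  qed
  have pre_compact: "\<And>K. compactin Y K \<Longrightarrow> compact {x \<in> V. q x \<in> K}"
  proof -
    fix K assume "compactin Y K"
    then have "compactin (top_of_set V) {x \<in> topspace (top_of_set V). q x \<in> K}"
      using proper unfolding proper_map_alt by blast
    then show "compact {x \<in> V. q x \<in> K}" by (simp add: compactin_subtopology compactin_euclidean_iff)
  qed
  have conn_pre: "gconnected (top_of_set V) E {x \<in> V. q x \<in> K}"
    if KC: "connectedin Y K" and Kc: "compact {x \<in> V. q x \<in> K}" for K
  proof -
    let ?Kt = "{x \<in> V. q x \<in> K}"
    have KY: "K \<subseteq> topspace Y" using KC by (simp add: connectedin_def)
    have Ktc: "closedin (top_of_set V) ?Kt" by (intro closed_subset compact_imp_closed Kc) auto
    have "\<not> gdisconnected (top_of_set V) E ?Kt"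
    proof
      assume "gdisconnected (top_of_set V) E ?Kt"
      then obtain P Q where PQ: "P \<noteq> {}" "Q \<noteq> {}" "P \<union> Q = ?Kt" "P \<inter> Q = {}"
        "closedin (subtopology (top_of_set V) ?Kt) P" "closedin (subtopology (top_of_set V) ?Kt) Q"
        "\<forall>p\<in>P. \<forall>q\<in>Q. (p, q) \<notin> E" unfolding gdisconnected_def by blast
      have cP: "closedin Y (q ` P)" using qclosed closedin_trans_full[OF PQ(5) Ktc] by blast
      have cQ: "closedin Y (q ` Q)" using qclosed closedin_trans_full[OF PQ(6) Ktc] by blast
      have "\<exists>E1 E2. closedin Y E1 \<and> closedin Y E2 \<and> K \<subseteq> E1 \<union> E2 \<and> E1 \<inter> E2 \<inter> K = {} \<and> E1 \<inter> K \<noteq> {} \<and> E2 \<inter> K \<noteq> {}"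
      proof (intro exI conjI)
        show "closedin Y (q ` P)" by (rule cP)
        show "closedin Y (q ` Q)" by (rule cQ)
        show "K \<subseteq> q ` P \<union> q ` Q"
        proof
          fix k assume k: "k \<in> K"
          then obtain x where "x \<in> V" "k = q x" using KY tY by auto
          then have "x \<in> P \<union> Q" using k PQ(3) by auto
          then show "k \<in> q ` P \<union> q ` Q" using \<open>k = q x\<close> by blast
        qed
        show "q ` P \<inter> q ` Q \<inter> K = {}"
        proof (rule ccontr)
          assume "q ` P \<inter> q ` Q \<inter> K \<noteq> {}"
          then obtain p p' where pp: "p \<in> P" "p' \<in> Q" "q p = q p'" by blast
          then have "p \<in> V" "p' \<in> V" using PQ(3) by auto
          then have "(p, p') \<in> E" using assms(3) pp(3) by blast
          then show False using PQ(7) pp by blast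
        qed
        show "q ` P \<inter> K \<noteq> {}" using PQ(1,3) by blast
        show "q ` Q \<inter> K \<noteq> {}" using PQ(2,3) by blast
      qed
      then show False using KC unfolding connectedin_closedin by blast
    qed
    then show ?thesis unfolding gconnected_def by auto
  qed
  show ?thesis unfolding hereditarily_unicoherent_def
  proof (intro allI impI)
    fix K L assume KL: "subcontinuum Y K \<and> subcontinuum Y L"
    define Kt where "Kt = {x \<in> V. q x \<in> K}"
    define Lt where "Lt = {x \<in> V. q x \<in> L}"
    have cKt: "compact Kt" using KL pre_compact unfolding subcontinuum_def Kt_def by blast
    have cLt: "compact Lt" using KL pre_compact unfolding subcontinuum_def Lt_def by blast
    have gKt: "gconnected (top_of_set V) E Kt" using conn_pre KL cKt unfolding subcontinuum_def Kt_def by blast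
    have gLt: "gconnected (top_of_set V) E Lt" using conn_pre KL cLt unfolding subcontinuum_def Lt_def by blast
    have KLY: "K \<inter> L \<subseteq> topspace Y" using KL unfolding subcontinuum_def by blast
    show "connectedin Y (K \<inter> L)"
    proof (rule ccontr)
      assume "\<not> connectedin Y (K \<inter> L)"
      then obtain E1 E2 where EE: "closedin Y E1" "closedin Y E2" "K \<inter> L \<subseteq> E1 \<union> E2"
        "E1 \<inter> E2 \<inter> (K \<inter> L) = {}" "E1 \<inter> (K \<inter> L) \<noteq> {}" "E2 \<inter> (K \<inter> L) \<noteq> {}"
        using KLY unfolding connectedin_closedin by blast
      define M1 where "M1 = {x \<in> V. q x \<in> E1} \<inter> Kt \<inter> Lt"
      define M2 where "M2 = {x \<in> V. q x \<in> E2} \<inter> Kt \<inter> Lt"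
      have "closedin (top_of_set V) {x \<in> V. q x \<in> E1}"
        using closedin_continuous_map_preimage[OF qc EE(1)] by simp
      then have "closed {x \<in> V. q x \<in> E1}" using clV closedin_closed_trans by blast
      then have cM1: "compact M1" unfolding M1_def using cKt cLt
        by (simp add: closed_Int_compact compact_Int)
      have "closedin (top_of_set V) {x \<in> V. q x \<in> E2}"
        using closedin_continuous_map_preimage[OF qc EE(2)] by simp
      then have "closed {x \<in> V. q x \<in> E2}" using clV closedin_closed_trans by blast
      then have cM2: "compact M2" unfolding M2_def using cKt cLt
        by (simp add: closed_Int_compact compact_Int)
      obtain x1 where x1: "x1 \<in> M1"
      proof -
        obtain y where y: "y \<in> E1" "y \<in> K" "y \<in> L" using EE(5) by blast
        then obtain x where "x \<in> V" "y = q x" using KLY tY by blast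
        then have "x \<in> M1" using y unfolding M1_def Kt_def Lt_def by blast
        then show ?thesis using that by blast
      qed
      obtain x2 where x2: "x2 \<in> M2"
      proof -
        obtain y where y: "y \<in> E2" "y \<in> K" "y \<in> L" using EE(6) by blast
        then obtain x where "x \<in> V" "y = q x" using KLY tY by blast
        then have "x \<in> M2" using y unfolding M2_def Kt_def Lt_def by blast
        then show ?thesis using that by blast
      qed
      have cover: "Kt \<inter> Lt \<subseteq> M1 \<union> M2" using EE(3) unfolding M1_def M2_def Kt_def Lt_def by blast
      have noedge: "\<And>x y. x \<in> M1 \<Longrightarrow> y \<in> M2 \<Longrightarrow> (x,y) \<notin> E"
      proof
        fix x y assume xy: "x \<in> M1" "y \<in> M2" "(x,y) \<in> E"
        then have "q x = q y" using assms(3) Esub by blast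
        then show False using xy EE(4) unfolding M1_def M2_def Kt_def Lt_def by auto
      qed
      have M1V: "M1 \<subseteq> V" "M2 \<subseteq> V" "Kt \<subseteq> V" "Lt \<subseteq> V" unfolding M1_def M2_def Kt_def Lt_def by auto
      have M12ne: "M1 \<noteq> {}" "M2 \<noteq> {}" using x1 x2 by auto
      have clM: "closed M1" "closed M2" using cM1 cM2 compact_imp_closed by auto
      obtain \<eta> where eta: "\<eta> > 0" "\<And>x y. (x,y) \<in> E \<Longrightarrow> \<eta> \<le> infdist x M1 + infdist y M2"
      proof -
        have Ene: "E \<noteq> {}" using Erefl[of x1] x1 M1V by auto
        have "continuous_on E (\<lambda>p. infdist (fst p) M1 + infdist (snd p) M2)"
          by (intro continuous_intros)
        then obtain p0 where p0: "p0 \<in> E" "\<And>p. p \<in> E \<Longrightarrow> infdist (fst p0) M1 + infdist (snd p0) M2 \<le> infdist (fst p) M1 + infdist (snd p) M2"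
          using continuous_attains_inf[OF cE Ene] by blast
        have pos: "infdist (fst p0) M1 + infdist (snd p0) M2 > 0"
        proof (rule ccontr)
          assume "\<not> ?thesis"
          then have "infdist (fst p0) M1 = 0" "infdist (snd p0) M2 = 0"
            using infdist_nonneg[of "fst p0" M1] infdist_nonneg[of "snd p0" M2] by linarith+
          then have "fst p0 \<in> M1" "snd p0 \<in> M2" using in_closed_iff_infdist_zero clM M12ne by blast+
          then show False using noedge p0(1) by (metis prod.collapse)
        qed
        show ?thesis
          apply (rule that[of "infdist (fst p0) M1 + infdist (snd p0) M2"])
          using pos p0(2) by force+
      qed
      obtain \<epsilon>0 where eps0: "\<epsilon>0 > 0" "\<And>k l. k \<in> Kt \<Longrightarrow> l \<in> Lt \<Longrightarrow> dist k l < \<epsilon>0 \<Longrightarrow>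
          infdist k M1 < \<eta>/4 \<or> infdist k M2 < \<eta>/4"
      proof -
        define S where "S = (Kt \<times> Lt) \<inter> ({p. \<eta>/4 \<le> infdist (fst p) M1} \<inter> {p. \<eta>/4 \<le> infdist (fst p) M2})"
        have "closed ({p. \<eta>/4 \<le> infdist (fst p) M1} \<inter> {p. \<eta>/4 \<le> infdist (fst p) M2})"
          by (intro closed_Int closed_Collect_le continuous_intros)
        then have cS: "compact S" unfolding S_def by (rule compact_Int_closed[OF compact_Times[OF cKt cLt]])
        show ?thesis
        proof (cases "S = {}")
          case True
          show ?thesis
          proof (rule that[of 1])
            fix k l assume kl: "k \<in> Kt" "l \<in> Lt" "dist k l < 1"
            have "(k,l) \<notin> S" using True by blast
            then show "infdist k M1 < \<eta>/4 \<or> infdist k M2 < \<eta>/4" using kl unfolding S_def by auto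
          qed simp
        next
          case False
          have "continuous_on S (\<lambda>p. dist (fst p) (snd p))" by (intro continuous_intros)
          then obtain p1 where p1: "p1 \<in> S" "\<And>p. p \<in> S \<Longrightarrow> dist (fst p1) (snd p1) \<le> dist (fst p) (snd p)"
            using continuous_attains_inf[OF cS False] by blast
          have pos: "dist (fst p1) (snd p1) > 0"
          proof (rule ccontr)
            assume "\<not> ?thesis"
            then have eq: "fst p1 = snd p1" by simp
            have "fst p1 \<in> Kt" "snd p1 \<in> Lt" using p1(1) unfolding S_def by auto
            then have "fst p1 \<in> M1 \<union> M2" using eq cover by auto
            then have "infdist (fst p1) M1 = 0 \<or> infdist (fst p1) M2 = 0" by auto
            moreover have "\<eta>/4 \<le> infdist (fst p1) M1" "\<eta>/4 \<le> infdist (fst p1) M2" using p1(1) unfolding S_def by auto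
            ultimately show False using eta(1) by auto
          qed
          show ?thesis
          proof (rule that[OF pos])
            fix k l assume kl: "k \<in> Kt" "l \<in> Lt" "dist k l < dist (fst p1) (snd p1)"
            show "infdist k M1 < \<eta>/4 \<or> infdist k M2 < \<eta>/4"
            proof (rule ccontr)
              assume "\<not> ?thesis"
              then have "(k,l) \<in> S" using kl unfolding S_def by auto
              then show False using p1(2)[of "(k,l)"] kl(3) by simp
            qed
          qed
        qed
      qed
      define \<epsilon> where "\<epsilon> = min (\<eta>/8) \<epsilon>0"
      have epos: "\<epsilon> > 0" using eta(1) eps0(1) unfolding \<epsilon>_def by simp
      obtain A EA f where A: "finite_connected_graph A EA" and fconf: "confluent (top_of_set V) E (discrete_topology A) EA f"
        and fdiam: "\<forall>a\<in>A. diameter {x \<in> V. f x = a} < \<epsilon>"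
        using small[OF epos] by blast
      have fepi: "epimorphism (top_of_set V) E (discrete_topology A) EA f" using fconf unfolding confluent_def by blast
      have fcont: "continuous_map (top_of_set V) (discrete_topology A) f" and fimg: "f ` V = A"
        and fE: "(\<lambda>(a, b). (f a, f b)) ` E = EA" using fepi unfolding epimorphism_def by auto
      have fdist: "\<And>x y. x \<in> V \<Longrightarrow> y \<in> V \<Longrightarrow> f x = f y \<Longrightarrow> dist x y < \<epsilon>"
      proof -
        fix x y assume xy: "x \<in> V" "y \<in> V" "f x = f y"
        have "{z \<in> V. f z = f x} \<subseteq> V" by blast
        then have "bounded {z \<in> V. f z = f x}" by (rule bounded_subset[OF compact_imp_bounded[OF cV]])
        then have "dist x y \<le> diameter {z \<in> V. f z = f x}" using xy by (intro diameter_bounded_bound) auto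
        also have "\<dots> < \<epsilon>" using fdiam fimg xy(1) by blast
        finally show "dist x y < \<epsilon>" .
      qed
      have fedge: "\<And>x y. (x,y) \<in> E \<Longrightarrow> (f x, f y) \<in> EA"
      proof -
        fix x y assume "(x,y) \<in> E"
        then have "(\<lambda>(a, b). (f a, f b)) (x,y) \<in> (\<lambda>(a, b). (f a, f b)) ` E" by (rule imageI)
        then show "(f x, f y) \<in> EA" using fE by simp
      qed
      have fA: "\<And>x. x \<in> V \<Longrightarrow> f x \<in> A" using fimg by blast
      have gA: "graph_rel A EA" using A unfolding finite_connected_graph_def by blast
      have EAsym: "\<And>a b. (a,b) \<in> EA \<Longrightarrow> (b,a) \<in> EA" using gA unfolding graph_rel_def by blast
      define KA where "KA = f ` Kt"
      define LA where "LA = f ` Lt"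
      define T2 where "T2 = {t \<in> KA \<inter> LA. \<exists>x\<in>V. f x = t \<and> infdist x M2 < \<eta>/2}"
      have x1KL: "x1 \<in> Kt" "x1 \<in> Lt" "x1 \<in> V" and x2KL: "x2 \<in> Kt" "x2 \<in> Lt" "x2 \<in> V"
        using x1 x2 M1V unfolding M1_def M2_def by auto
      have fx1: "f x1 \<in> KA" "f x1 \<in> LA" and fx2: "f x2 \<in> KA" "f x2 \<in> LA"
        unfolding KA_def LA_def using x1KL x2KL by auto
      have x2T2: "f x2 \<in> T2"
      proof -
        have "infdist x2 M2 = 0" using x2 in_closed_iff_infdist_zero[OF clM(2) M12ne(2)] by blast
        then show ?thesis unfolding T2_def using fx2 x2KL(3) eta(1) by force
      qed
      have x1T2: "f x1 \<notin> T2"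
      proof
        assume "f x1 \<in> T2"
        then obtain x' where x': "x' \<in> V" "f x' = f x1" "infdist x' M2 < \<eta>/2" unfolding T2_def by blast
        have d: "dist x1 x' < \<epsilon>" using fdist[OF x1KL(3) x'(1)] x'(2) by simp
        have "infdist x1 M2 \<le> infdist x' M2 + dist x1 x'" by (rule infdist_triangle)
        moreover have "\<eta> \<le> infdist x1 M1 + infdist x1 M2" using eta(2) Erefl[OF x1KL(3)] by blast
        moreover have "infdist x1 M1 = 0" using x1 in_closed_iff_infdist_zero[OF clM(1) M12ne(1)] by blast
        moreover have "\<epsilon> \<le> \<eta>/8" unfolding \<epsilon>_def by simp
        ultimately show False using x'(3) d eta(1) by linarith
      qed
      have T2core: "\<And>a b. (a,b) \<in> EA \<Longrightarrow> a \<in> T2 \<Longrightarrow> b \<in> KA \<Longrightarrow> b \<in> LA \<Longrightarrow> b \<in> T2"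
      proof (rule ccontr)
        fix a b assume ab: "(a,b) \<in> EA" "a \<in> T2" "b \<in> KA" "b \<in> LA" "b \<notin> T2"
        have "(a,b) \<in> (\<lambda>(a, b). (f a, f b)) ` E" using ab(1) fE by simp
        then obtain e where e: "e \<in> E" "(a,b) = (\<lambda>(a, b). (f a, f b)) e" by (rule imageE)
        obtain x y where "e = (x,y)" by (cases e)
        then have xy: "(x,y) \<in> E" "f x = a" "f y = b" using e by auto
        have xyV: "x \<in> V" "y \<in> V" using Esub xy(1) by auto
        obtain x' where x': "x' \<in> V" "f x' = a" "infdist x' M2 < \<eta>/2" using ab(2) unfolding T2_def by blast
        have dx: "dist x x' < \<epsilon>" using fdist[OF xyV(1) x'(1)] xy(2) x'(2) by simp
        obtain k where k: "k \<in> Kt" "f k = b" using ab(3) unfolding KA_def by blast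
        obtain l where l: "l \<in> Lt" "f l = b" using ab(4) unfolding LA_def by blast
        have kV: "k \<in> V" "l \<in> V" using k l M1V by auto
        have "dist k l < \<epsilon>" using fdist[OF kV] k l by simp
        then have "dist k l < \<epsilon>0" unfolding \<epsilon>_def by simp
        then have kM: "infdist k M1 < \<eta>/4 \<or> infdist k M2 < \<eta>/4" using eps0(2) k(1) l(1) by blast
        have "\<not> infdist k M2 < \<eta>/2"
        proof
          assume "infdist k M2 < \<eta>/2"
          then have "b \<in> T2" unfolding T2_def using ab(3,4) kV(1) k(2) by blast
          then show False using ab(5) by blast
        qed
        then have k1: "infdist k M1 < \<eta>/4" using kM eta(1) by linarith
        have dy: "dist y k < \<epsilon>" using fdist[OF xyV(2) kV(1)] xy(3) k(2) by simp
        have "infdist y M1 \<le> infdist k M1 + dist y k" by (rule infdist_triangle)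
        moreover have "infdist x M2 \<le> infdist x' M2 + dist x x'" by (rule infdist_triangle)
        moreover have "\<eta> \<le> infdist y M1 + infdist x M2" using eta(2) Esym[OF xy(1)] by blast
        moreover have "\<epsilon> \<le> \<eta>/8" unfolding \<epsilon>_def by simp
        ultimately show False using k1 dy dx x'(3) by linarith
      qed
      have T2sub: "T2 \<subseteq> KA \<inter> LA" unfolding T2_def by blast
      have T2edge: "\<And>a b. (a,b) \<in> EA \<Longrightarrow> a \<in> KA \<Longrightarrow> a \<in> LA \<Longrightarrow> b \<in> KA \<Longrightarrow> b \<in> LA \<Longrightarrow> (a \<in> T2 \<longleftrightarrow> b \<in> T2)"
        using T2core EAsym by blast
      have KAconn: "gconnected (discrete_topology A) EA KA" and LAconn: "gconnected (discrete_topology A) EA LA"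
      proof -
        have gen: "gconnected (discrete_topology A) EA (f ` St)"
          if St: "gconnected (top_of_set V) E St" "St \<subseteq> V" for St
        proof (rule gconn_disc_intro)
          show "f ` St \<subseteq> A" using St(2) fA by blast
          fix P assume P: "P \<subseteq> f ` St" "P \<noteq> {}" "\<forall>p\<in>P. \<forall>q\<in>f ` St. (p, q) \<in> EA \<longrightarrow> q \<in> P"
          have eqR: "(f x \<in> P) = (f y \<in> P)" if "x \<in> St" "y \<in> St" "(x,y) \<in> E" for x y
          proof
            assume "f x \<in> P" then show "f y \<in> P" using P(3) fedge[OF that(3)] that(2) by blast
          next
            assume "f y \<in> P" then show "f x \<in> P" using P(3) fedge[OF Esym[OF that(3)]] that(1) by blast
          qed
          obtain k0 where k0: "k0 \<in> St" "f k0 \<in> P" using P(1,2) by blast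
          show "P = f ` St"
          proof
            show "f ` St \<subseteq> P"
            proof
              fix a assume "a \<in> f ` St"
              then obtain k where k: "k \<in> St" "a = f k" by blast
              have "(f k0 \<in> P) = (f k \<in> P)"
                using gconn_eq[OF St(1) fcont, of "\<lambda>a. a \<in> P", OF eqR k0(1) k(1)] by simp
              then show "a \<in> P" using k0(2) k(2) by blast
            qed
          qed (rule P(1))
        qed
        show "gconnected (discrete_topology A) EA KA" unfolding KA_def by (rule gen[OF gKt M1V(3)])
        show "gconnected (discrete_topology A) EA LA" unfolding LA_def by (rule gen[OF gLt M1V(4)])
      qed
      define \<sigma> where "\<sigma> = (\<lambda>a b. a \<in> LA \<and> b \<in> LA \<and> ((a \<in> T2) \<noteq> (b \<in> T2)))"
      have \<sigma>sym: "\<And>a b. \<sigma> a b = \<sigma> b a" unfolding \<sigma>_def by auto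
      have \<sigma>irr: "\<And>a. \<not> \<sigma> a a" unfolding \<sigma>_def by auto
      have \<sigma>K: "\<And>a b. (a,b) \<in> EA \<Longrightarrow> a \<in> KA \<Longrightarrow> b \<in> KA \<Longrightarrow> \<not> \<sigma> a b"
      proof -
        fix a b assume ab: "(a,b) \<in> EA" "a \<in> KA" "b \<in> KA"
        show "\<not> \<sigma> a b"
        proof (cases "a \<in> LA \<and> b \<in> LA")
          case True
          then have "(a \<in> T2) = (b \<in> T2)" using T2edge[OF ab(1) ab(2)] ab(3) by blast
          then show ?thesis unfolding \<sigma>_def by simp
        next
          case False
          then show ?thesis unfolding \<sigma>_def by blast
        qed
      qed
      have \<sigma>L: "\<And>a b. a \<in> LA \<Longrightarrow> b \<in> LA \<Longrightarrow> \<sigma> a b = ((a \<in> T2) \<noteq> (b \<in> T2))"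
        unfolding \<sigma>_def by simp
      have unbal: False if psi: "\<forall>a b. (a,b) \<in> EA \<longrightarrow> (\<psi> b \<longleftrightarrow> (\<psi> a \<noteq> \<sigma> a b))" for \<psi>
      proof -
        define PK where "PK = {a \<in> KA. \<psi> a = \<psi> (f x1)}"
        have "\<forall>p\<in>PK. \<forall>q\<in>KA. (p, q) \<in> EA \<longrightarrow> q \<in> PK"
        proof (intro ballI impI)
          fix p r assume pr: "p \<in> PK" "r \<in> KA" "(p, r) \<in> EA"
          have "\<not> \<sigma> p r" using \<sigma>K[OF pr(3)] pr(1,2) unfolding PK_def by blast
          then have "\<psi> r = \<psi> p" using psi[rule_format, OF pr(3)] by simp
          then show "r \<in> PK" using pr(1,2) unfolding PK_def by simp
        qed
        moreover have "PK \<subseteq> KA" unfolding PK_def by blast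
        ultimately have "PK = {} \<or> PK = KA" using gconn_disc[OF KAconn] by blast
        moreover have "f x1 \<in> PK" unfolding PK_def using fx1 by simp
        ultimately have "f x2 \<in> PK" using fx2 by blast
        then have e1: "\<psi> (f x2) = \<psi> (f x1)" unfolding PK_def by simp
        define PL where "PL = {a \<in> LA. (\<psi> a \<noteq> (a \<in> T2)) = (\<psi> (f x1) \<noteq> (f x1 \<in> T2))}"
        have "\<forall>p\<in>PL. \<forall>q\<in>LA. (p, q) \<in> EA \<longrightarrow> q \<in> PL"
        proof (intro ballI impI)
          fix p r assume pr: "p \<in> PL" "r \<in> LA" "(p, r) \<in> EA"
          have pL: "p \<in> LA" using pr(1) unfolding PL_def by blast
          have "\<psi> r = (\<psi> p \<noteq> \<sigma> p r)" using psi[rule_format, OF pr(3)] by simp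
          then have "\<psi> r = (\<psi> p \<noteq> ((p \<in> T2) \<noteq> (r \<in> T2)))" using \<sigma>L[OF pL pr(2)] by simp
          then have "(\<psi> r \<noteq> (r \<in> T2)) = (\<psi> p \<noteq> (p \<in> T2))" by argo
          then show "r \<in> PL" using pr(1,2) unfolding PL_def by simp
        qed
        moreover have "PL \<subseteq> LA" unfolding PL_def by blast
        ultimately have "PL = {} \<or> PL = LA" using gconn_disc[OF LAconn] by blast
        moreover have "f x1 \<in> PL" unfolding PL_def using fx1 by simp
        ultimately have "f x2 \<in> PL" using fx2 by blast
        then have "(\<psi> (f x2) \<noteq> True) = (\<psi> (f x1) \<noteq> False)" unfolding PL_def using x1T2 x2T2 by simp
        then show False using e1 by simp
      qed
      let ?B = "cov_V A" and ?EB = "cov_E EA \<sigma>"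
      have Bfc: "finite_connected_graph ?B ?EB" by (rule cov_connected[OF A \<sigma>sym \<sigma>irr unbal])
      have gconf: "confluent (discrete_topology ?B) ?EB (discrete_topology A) EA (\<lambda>n. n div 2)"
        using cov_confluent[OF A \<sigma>sym \<sigma>irr] .
      obtain h where hconf: "confluent (top_of_set V) E (discrete_topology ?B) ?EB h"
        and hf: "\<forall>x\<in>V. f x = h x div 2"
        using amalg[OF A Bfc fconf gconf] by blast
      have hepi: "epimorphism (top_of_set V) E (discrete_topology ?B) ?EB h" using hconf unfolding confluent_def by blast
      have hcont: "continuous_map (top_of_set V) (discrete_topology ?B) h" and hE: "(\<lambda>(a, b). (h a, h b)) ` E = ?EB"
        using hepi unfolding epimorphism_def by blast+
      have hedge: "\<And>x y. (x,y) \<in> E \<Longrightarrow> (h x, h y) \<in> ?EB"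
      proof -
        fix x y assume "(x,y) \<in> E"
        then have "(\<lambda>(a, b). (h a, h b)) (x,y) \<in> (\<lambda>(a, b). (h a, h b)) ` E" by (rule imageI)
        then show "(h x, h y) \<in> ?EB" using hE by simp
      qed
      have layer: "(h x mod 2 = h y mod 2) = (\<not> \<sigma> (f x) (f y))" if "(x,y) \<in> E" for x y
      proof -
        have "x \<in> V" "y \<in> V" using Esub that by auto
        then have "f x = h x div 2" "f y = h y div 2" using hf by auto
        moreover have "(h x div 2, h y div 2) \<in> EA \<and> ((h x mod 2 = h y mod 2) = (\<not> \<sigma> (h x div 2) (h y div 2)))"
          using hedge[OF that] unfolding cov_E_def by (simp only: mem_Collect_eq prod.case)
        ultimately show ?thesis by (simp only:)
      qed
      have m2: "\<And>n::nat. (n mod 2 \<noteq> 0) = (n mod 2 = 1)" by presburger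
      have cK: "(\<lambda>n. n mod 2 = 0) (h x1) = (\<lambda>n. n mod 2 = 0) (h x2)"
      proof (rule gconn_eq[OF gKt hcont _ x1KL(1) x2KL(1)])
        fix x y assume xy: "x \<in> Kt" "y \<in> Kt" "(x,y) \<in> E"
        have "f x \<in> KA" "f y \<in> KA" using xy unfolding KA_def by auto
        then have "\<not> \<sigma> (f x) (f y)" using \<sigma>K fedge[OF xy(3)] by blast
        then have "h x mod 2 = h y mod 2" using layer[OF xy(3)] by simp
        then show "(h x mod 2 = 0) = (h y mod 2 = 0)" by simp
      qed
      have cL: "(\<lambda>n. (n mod 2 = 0) \<noteq> (n div 2 \<in> T2)) (h x1) = (\<lambda>n. (n mod 2 = 0) \<noteq> (n div 2 \<in> T2)) (h x2)"
      proof (rule gconn_eq[OF gLt hcont _ x1KL(2) x2KL(2)])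
        fix x y assume xy: "x \<in> Lt" "y \<in> Lt" "(x,y) \<in> E"
        have xyV: "x \<in> V" "y \<in> V" using xy M1V by auto
        have "f x \<in> LA" "f y \<in> LA" using xy unfolding LA_def by auto
        then have "(h x mod 2 = h y mod 2) = ((f x \<in> T2) = (f y \<in> T2))" using layer[OF xy(3)] \<sigma>L by simp
        moreover have "f x = h x div 2" "f y = h y div 2" using hf xyV by auto
        ultimately have "(h x mod 2 = h y mod 2) = ((h x div 2 \<in> T2) = (h y div 2 \<in> T2))" by simp
        moreover have "(h x mod 2 = h y mod 2) = ((h x mod 2 = 0) = (h y mod 2 = 0))" using m2 by presburger
        ultimately show "((h x mod 2 = 0) \<noteq> (h x div 2 \<in> T2)) = ((h y mod 2 = 0) \<noteq> (h y div 2 \<in> T2))"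
          by argo
      qed
      have "h x1 div 2 \<notin> T2" "h x2 div 2 \<in> T2" using hf x1KL(3) x2KL(3) x1T2 x2T2 by auto
      moreover have "(h x1 mod 2 = 0) = (h x2 mod 2 = 0)" using cK by (simp only:)
      moreover have "((h x1 mod 2 = 0) \<noteq> (h x1 div 2 \<in> T2)) = ((h x2 mod 2 = 0) \<noteq> (h x2 div 2 \<in> T2))"
        using cL by (simp only:)
      ultimately show False by argo
    qed
  qed
qed

end
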